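(* Let $f\colon\mathbb{R}^k_+\to\operatorname{int}(\mathbb{R}^k_+)$ be continuous and concave with respect to the cone order, with a fixed point $x^\star\in\operatorname{int}(\mathbb{R}^k_+)$. Let $U\subset\operatorname{int}(\mathbb{R}^k_+)$ be a compact neighborhood of $x^\star$, and let $c\in[0,1)$ be a local contraction factor of $f$ on $U$, i.e., $d_T(f(x),f(y))\le c\,d_T(x,y)$ for all $x,y\in U$. Let $\rho=\rho(f_\infty)$ be the spectral radius of the asymptotic mapping of $f$. Then $c\ge\rho$.
   Context: $\mathbb{R}^k_+$ is the nonnegative orthant, $\operatorname{int}(\mathbb{R}^k_+)$ the vectors with strictly positive coordinates, $x\le y$ means $y-x\in\mathbb{R}^k_+$. Concavity w.r.t. the cone order: $f(tx+(1-t)y)\ge tf(x)+(1-t)f(y)$ for $x,y\in\mathbb{R}^k_+$, $t\in(0,1)$. Thompson's metric: $d_T(x,y)=\ln\max\{M(x,y),M(y,x)\}$, $M(x,y)=\inf\{\beta>0:x\le\beta y\}$. The asymptotic mapping of $f$ is $f_\infty\colon\mathbb{R}^k_+\to\mathbb{R}^k_+$, $f_\infty(x)=\lim_{p\to\infty}\frac1p f(px)$ (this limit exists for such $f$), and its spectral radius is $\rho(f_\infty)=\max\{\lambda\ge 0: \exists x\in\mathbb{R}^k_+\setminus\{0\},\ f_\infty(x)=\lambda x\}$ (this maximum exists). Compactness and neighborhoods refer to the usual topology of $\mathbb{R}^k$. *)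

theory Defs
  imports "HOL-Analysis.Analysis"
begin

definition nonneg_orthant :: "(real^'k) set" where
  "nonneg_orthant = {x. \<forall>i. 0 \<le> x $ i}"

definition pos_orthant :: "(real^'k) set" where
  "pos_orthant = {x. \<forall>i. 0 < x $ i}"

definition cone_le :: "real^'k \<Rightarrow> real^'k \<Rightarrow> bool" where
  "cone_le x y \<longleftrightarrow> y - x \<in> nonneg_orthant"

definition cone_concave :: "(real^'k \<Rightarrow> real^'k) \<Rightarrow> bool" where
  "cone_concave f \<longleftrightarrow> (\<forall>x\<in>nonneg_orthant. \<forall>y\<in>nonneg_orthant. \<forall>t::real. 0 < t \<and> t < 1 \<longrightarrow>
      cone_le (t *\<^sub>R f x + (1 - t) *\<^sub>R f y) (f (t *\<^sub>R x + (1 - t) *\<^sub>R y)))"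

definition M_fun :: "real^'k \<Rightarrow> real^'k \<Rightarrow> real" where
  "M_fun x y = Inf {\<beta>. \<beta> > 0 \<and> cone_le x (\<beta> *\<^sub>R y)}"

definition thompson :: "real^'k \<Rightarrow> real^'k \<Rightarrow> real" where
  "thompson x y = ln (max (M_fun x y) (M_fun y x))"

definition asymptotic_map :: "(real^'k \<Rightarrow> real^'k) \<Rightarrow> real^'k \<Rightarrow> real^'k" where
  "asymptotic_map f x = Lim at_top (\<lambda>p::real. (1 / p) *\<^sub>R f (p *\<^sub>R x))"

definition cone_spectral_radius :: "(real^'k \<Rightarrow> real^'k) \<Rightarrow> real" where
  "cone_spectral_radius g = (GREATEST l. l \<ge> 0 \<and>
      (\<exists>x\<in>nonneg_orthant. x \<noteq> 0 \<and> g x = l *\<^sub>R x))"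

end

theory Submission imports Defs begin

lemma nn_iff: "x \<in> nonneg_orthant \<longleftrightarrow> (\<forall>i. 0 \<le> x $ i)"
  by (simp add: nonneg_orthant_def)
lemma pos_iff: "x \<in> pos_orthant \<longleftrightarrow> (\<forall>i. 0 < x $ i)"
  by (simp add: pos_orthant_def)
lemma cle_iff: "cone_le x y \<longleftrightarrow> (\<forall>i. x $ i \<le> y $ i)"
  by (simp add: cone_le_def nonneg_orthant_def)


definition splx :: "(real^'k) set" where
  "splx = {x. (\<forall>j. 0 \<le> x $ j) \<and> sum (\<lambda>j. x $ j) UNIV = 1}"

lemma splx_closed: "closed (splx :: (real^'k) set)"
  unfolding splx_def
  by (intro closed_Collect_conj closed_Collect_all closed_Collect_le closed_Collect_eq continuous_intros)

lemma splx_le1: "x \<in> splx \<Longrightarrow> x $ j \<le> 1"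
proof -
  assume x: "x \<in> splx"
  have "x $ j \<le> sum (\<lambda>j. x $ j) UNIV"
    using x by (intro member_le_sum) (auto simp: splx_def)
  thus ?thesis using x by (simp add: splx_def)
qed

lemma splx_bounded: "bounded (splx :: (real^'k) set)"
  unfolding bounded_iff
proof (intro exI ballI)
  fix x :: "real^'k" assume x: "x \<in> splx"
  have "norm x \<le> sum (\<lambda>i. \<bar>x $ i\<bar>) UNIV" by (rule norm_le_l1_cart)
  also have "\<dots> = sum (\<lambda>i. x $ i) UNIV" using x by (simp add: splx_def)
  finally show "norm x \<le> 1" using x by (simp add: splx_def)
qed

lemma splx_compact: "compact (splx :: (real^'k) set)"
  using splx_closed splx_bounded by (simp add: compact_eq_bounded_closed)

lemma splx_convex: "convex (splx :: (real^'k) set)"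
  unfolding convex_def splx_def
  by (auto simp: sum.distrib sum_distrib_left[symmetric] intro!: add_nonneg_nonneg)

lemma splx_ne: "(splx :: (real^'k) set) \<noteq> {}"
proof -
  have "(\<chi> j. 1 / real CARD('k)) \<in> (splx :: (real^'k) set)"
    by (simp add: splx_def)
  thus ?thesis by blast
qed

lemma splx_nn: "x \<in> splx \<Longrightarrow> x \<in> nonneg_orthant"
  by (simp add: splx_def nn_iff)

lemma splx_nz: "x \<in> splx \<Longrightarrow> x \<noteq> 0"
  by (auto simp: splx_def)


lemma M_upper: "0 < \<beta> \<Longrightarrow> cone_le z (\<beta> *\<^sub>R w) \<Longrightarrow> M_fun z w \<le> \<beta>"
  unfolding M_fun_def by (rule cInf_lower) (auto intro!: bdd_belowI[of _ 0])

lemma M_lower: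
  assumes w: "w \<in> pos_orthant" and z: "z \<in> nonneg_orthant"
  shows "z $ i / w $ i \<le> M_fun z w"
proof -
  define b where "b = sum (\<lambda>j. z $ j / w $ j) UNIV + 1"
  have wp: "0 < w $ j" for j using w by (simp add: pos_iff)
  have zn: "0 \<le> z $ j" for j using z by (simp add: nn_iff)
  have r: "z $ j / w $ j \<le> sum (\<lambda>j. z $ j / w $ j) UNIV" for j
    using wp zn by (intro member_le_sum) (auto intro: divide_nonneg_pos)
  have b0: "0 < b" unfolding b_def using wp zn by (intro add_nonneg_pos sum_nonneg) (auto intro: divide_nonneg_pos)
  have "cone_le z (b *\<^sub>R w)" unfolding cle_iff
  proof
    fix j
    have "z $ j / w $ j \<le> b" using r[of j] by (simp add: b_def)
    thus "z $ j \<le> (b *\<^sub>R w) $ j" using wp[of j] by (simp add: field_simps)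
  qed
  hence ne: "{\<beta>. \<beta> > 0 \<and> cone_le z (\<beta> *\<^sub>R w)} \<noteq> {}" using b0 by blast
  show ?thesis unfolding M_fun_def
  proof (rule cInf_greatest[OF ne])
    fix \<beta> assume "\<beta> \<in> {\<beta>. \<beta> > 0 \<and> cone_le z (\<beta> *\<^sub>R w)}"
    hence "z $ i \<le> \<beta> * w $ i" by (simp add: cle_iff)
    thus "z $ i / w $ i \<le> \<beta>" using wp[of i] by (simp add: field_simps)
  qed
qed

locale cfun =
  fixes f :: "real^'k \<Rightarrow> real^'k"
  assumes maps: "\<forall>x\<in>nonneg_orthant. f x \<in> pos_orthant"
    and cont: "continuous_on nonneg_orthant f"
    and conc: "cone_concave f"
begin

lemma fpos: "x \<in> nonneg_orthant \<Longrightarrow> 0 < f x $ i"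
  using maps by (auto simp: pos_iff)

lemma concI: "x \<in> nonneg_orthant \<Longrightarrow> y \<in> nonneg_orthant \<Longrightarrow> 0 < t \<Longrightarrow> t < 1 \<Longrightarrow>
   t * f x $ i + (1 - t) * f y $ i \<le> f (t *\<^sub>R x + (1 - t) *\<^sub>R y) $ i"
proof -
  assume a: "x \<in> nonneg_orthant" "y \<in> nonneg_orthant" "0 < t" "t < 1"
  have "cone_le (t *\<^sub>R f x + (1 - t) *\<^sub>R f y) (f (t *\<^sub>R x + (1 - t) *\<^sub>R y))"
    using conc a unfolding cone_concave_def by blast
  thus ?thesis unfolding cle_iff by simp
qed

lemma fmono:
  assumes x: "x \<in> nonneg_orthant" and le: "\<And>j. x $ j \<le> y $ j"
  shows "f x $ i \<le> f y $ i"
proof (rule ccontr)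
  assume "\<not> ?thesis"
  hence lt: "f y $ i < f x $ i" by simp
  have fx: "0 < f x $ i" using fpos x by blast
  define t where "t = (f x $ i - f y $ i) / (2 * f x $ i)"
  have t0: "0 < t" using lt fx by (simp add: t_def)
  have fy: "0 < f y $ i" using fpos[of y i] x le by (smt (verit) nn_iff)
  have t1: "t < 1" using lt fx fy by (simp add: t_def field_simps)
  define z where "z = x + (1/t) *\<^sub>R (y - x)"
  have z: "z \<in> nonneg_orthant" using x le t0 by (auto simp: nn_iff z_def intro!: add_nonneg_nonneg)
  have "t *\<^sub>R z + (1 - t) *\<^sub>R x = y" using t0 by (simp add: z_def algebra_simps)
  hence "t * f z $ i + (1 - t) * f x $ i \<le> f y $ i" using concI[OF z x t0 t1, of i] by simp
  moreover have "0 \<le> t * f z $ i" using t0 fpos[OF z, of i] by simp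
  ultimately have A: "(1 - t) * f x $ i \<le> f y $ i" by linarith
  have B: "(1 - t) * f x $ i = (f x $ i + f y $ i)/2" using fx by (simp add: t_def field_simps)
  from A B have C: "(f x $ i + f y $ i)/2 \<le> f y $ i" by simp
  from C lt show False by simp
qed

lemma fscale:
  assumes x: "x \<in> nonneg_orthant" and q: "0 < q" "q \<le> p"
  shows "f (p *\<^sub>R x) $ i / p \<le> f (q *\<^sub>R x) $ i / q"
proof (cases "q = p")
  case False
  hence qp: "q < p" using q by simp
  have px: "p *\<^sub>R x \<in> nonneg_orthant" using x q by (auto simp: nn_iff)
  have z: "(0::real^'k) \<in> nonneg_orthant" by (simp add: nn_iff)
  have "(q/p) * f (p *\<^sub>R x) $ i + (1 - q/p) * f 0 $ i \<le> f ((q/p) *\<^sub>R (p *\<^sub>R x) + (1 - q/p) *\<^sub>R 0) $ i"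
    using concI[OF px z, of "q/p" i] q qp by simp
  also have "(q/p) *\<^sub>R (p *\<^sub>R x) + (1 - q/p) *\<^sub>R 0 = q *\<^sub>R x" using q by simp
  finally have H: "(q/p) * f (p *\<^sub>R x) $ i + (1 - q/p) * f 0 $ i \<le> f (q *\<^sub>R x) $ i" .
  obtain a b c where abc: "a = f (p *\<^sub>R x) $ i" "b = f 0 $ i" "c = f (q *\<^sub>R x) $ i" by blast
  have b0: "0 < b" using fpos[OF z] abc by simp
  have "(q/p) * a \<le> c" using H abc b0 q qp
    by (smt (verit, best) divide_less_eq_1_pos mult_pos_pos)
  thus ?thesis using q abc by (simp add: field_simps)
qed simp


abbreviation "g \<equiv> asymptotic_map f"

lemma g_inf:
  assumes x: "x \<in> nonneg_orthant"
  shows "g x $ i = Inf ((\<lambda>p. f (p *\<^sub>R x) $ i / p) ` {0<..})"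
proof -
  define L where "L = (\<chi> j. Inf ((\<lambda>p. f (p *\<^sub>R x) $ j / p) ` {0<..}))"
  have px: "p *\<^sub>R x \<in> nonneg_orthant" if "0 < p" for p using x that by (auto simp: nn_iff)
  have "((\<lambda>p. (1 / p) *\<^sub>R f (p *\<^sub>R x)) \<longlongrightarrow> L) at_top"
  proof (rule vec_tendstoI)
    fix j
    let ?S = "(\<lambda>p. f (p *\<^sub>R x) $ j / p) ` {0<..}"
    have bdd: "bdd_below ?S"
      by (rule bdd_belowI[of _ 0]) (auto intro!: divide_nonneg_pos less_imp_le[OF fpos] px)
    have ne: "?S \<noteq> {}" by auto
    show "((\<lambda>p. ((1 / p) *\<^sub>R f (p *\<^sub>R x)) $ j) \<longlongrightarrow> L $ j) at_top"
    proof (rule order_tendstoI)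
      fix a assume a: "a < L $ j"
      show "\<forall>\<^sub>F p in at_top. a < ((1 / p) *\<^sub>R f (p *\<^sub>R x)) $ j"
        using eventually_gt_at_top[of "0::real"]
      proof (rule eventually_mono)
        fix p :: real assume p: "0 < p"
        have "L $ j \<le> f (p *\<^sub>R x) $ j / p" unfolding L_def using bdd p by (auto intro!: cInf_lower)
        thus "a < ((1 / p) *\<^sub>R f (p *\<^sub>R x)) $ j" using a by simp
      qed
    next
      fix b assume b: "L $ j < b"
      then obtain p0 where p0: "0 < p0" "f (p0 *\<^sub>R x) $ j / p0 < b"
        using cInf_lessD[OF ne] unfolding L_def by auto
      show "\<forall>\<^sub>F p in at_top. ((1 / p) *\<^sub>R f (p *\<^sub>R x)) $ j < b"
        using eventually_ge_at_top[of p0]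
      proof (rule eventually_mono)
        fix p :: real assume p: "p0 \<le> p"
        have "f (p *\<^sub>R x) $ j / p \<le> f (p0 *\<^sub>R x) $ j / p0" by (rule fscale[OF x p0(1) p])
        thus "((1 / p) *\<^sub>R f (p *\<^sub>R x)) $ j < b" using p0 by simp
      qed
    qed
  qed
  hence "g x = L" unfolding asymptotic_map_def by (intro tendsto_Lim) auto
  thus ?thesis unfolding L_def by simp
qed

lemma G1: "x \<in> nonneg_orthant \<Longrightarrow> 0 < p \<Longrightarrow> g x $ i \<le> f (p *\<^sub>R x) $ i / p"
  apply (subst g_inf, assumption)
  apply (rule cInf_lower)
   apply simp
  apply (rule bdd_belowI[of _ 0])
  apply (auto intro!: divide_nonneg_pos less_imp_le[OF fpos] simp: nn_iff)
  done

lemma G2: "x \<in> nonneg_orthant \<Longrightarrow> (\<And>p. 0 < p \<Longrightarrow> b \<le> f (p *\<^sub>R x) $ i / p) \<Longrightarrow> b \<le> g x $ i"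
  apply (subst g_inf, assumption)
  apply (rule cInf_greatest)
   apply auto
  done

lemma G0: "x \<in> nonneg_orthant \<Longrightarrow> 0 \<le> g x $ i"
  apply (rule G2, assumption)
  apply (auto intro!: divide_nonneg_pos less_imp_le[OF fpos] simp: nn_iff)
  done

lemma Gnn: "x \<in> nonneg_orthant \<Longrightarrow> g x \<in> nonneg_orthant"
  using G0 by (simp add: nn_iff)

lemma Gf: "x \<in> nonneg_orthant \<Longrightarrow> g x $ i \<le> f x $ i"
  using G1[of x 1 i] by simp

lemma Gmono:
  assumes x: "x \<in> nonneg_orthant" and le: "\<And>j. x $ j \<le> y $ j"
  shows "g x $ i \<le> g y $ i"
proof -
  have y: "y \<in> nonneg_orthant" using x le by (auto simp: nn_iff intro: order_trans)
  show ?thesis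
  proof (rule G2[OF y])
    fix p :: real assume p: "0 < p"
    have "g x $ i \<le> f (p *\<^sub>R x) $ i / p" by (rule G1[OF x p])
    also have "f (p *\<^sub>R x) $ i \<le> f (p *\<^sub>R y) $ i"
      using x le p by (intro fmono) (auto simp: nn_iff)
    hence "f (p *\<^sub>R x) $ i / p \<le> f (p *\<^sub>R y) $ i / p" using p by (simp add: divide_right_mono)
    finally show "g x $ i \<le> f (p *\<^sub>R y) $ i / p" .
  qed
qed

lemma Ghom:
  assumes x: "x \<in> nonneg_orthant" and a: "0 < a"
  shows "g (a *\<^sub>R x) = a *\<^sub>R g x"
proof -
  have ax: "a *\<^sub>R x \<in> nonneg_orthant" using x a by (auto simp: nn_iff)
  have "g (a *\<^sub>R x) $ i = a * g x $ i" for i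
  proof (rule antisym)
    have "g (a *\<^sub>R x) $ i / a \<le> g x $ i"
    proof (rule G2[OF x])
      fix p :: real assume p: "0 < p"
      have "g (a *\<^sub>R x) $ i \<le> f ((p/a) *\<^sub>R (a *\<^sub>R x)) $ i / (p/a)" using G1[OF ax, of "p/a" i] p a by simp
      also have "\<dots> = a * (f (p *\<^sub>R x) $ i / p)" using a by simp
      finally show "g (a *\<^sub>R x) $ i / a \<le> f (p *\<^sub>R x) $ i / p" using a by (simp add: field_simps)
    qed
    thus "g (a *\<^sub>R x) $ i \<le> a * g x $ i" using a by (simp add: field_simps)
  next
    show "a * g x $ i \<le> g (a *\<^sub>R x) $ i"
    proof (rule G2[OF ax])
      fix p :: real assume p: "0 < p"
      have "g x $ i \<le> f ((p*a) *\<^sub>R x) $ i / (p*a)" using G1[OF x, of "p*a" i] p a by simp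
      thus "a * g x $ i \<le> f (p *\<^sub>R (a *\<^sub>R x)) $ i / p" using a p by (simp add: field_simps)
    qed
  qed
  thus ?thesis by (simp add: vec_eq_iff)
qed


lemma LIM:
  assumes xn: "\<And>n. xn n \<in> nonneg_orthant" and x: "x \<in> nonneg_orthant"
    and xl: "xn \<longlonglongrightarrow> x" and yl: "yn \<longlonglongrightarrow> y"
    and a: "\<And>n i. g (xn n) $ i \<le> yn n $ i"
    and b: "\<And>q. 0 < q \<Longrightarrow> eventually (\<lambda>n. \<forall>i. yn n $ i \<le> f (q *\<^sub>R xn n) $ i / q) sequentially"
  shows "g x = y"
proof -
  have "g x $ i = y $ i" for i
  proof (rule antisym)
    show lo: "y $ i \<le> g x $ i"
    proof (rule G2[OF x])
      fix q :: real assume q: "0 < q"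
      have qx: "q *\<^sub>R x \<in> nonneg_orthant" using x q by (auto simp: nn_iff)
      have "((\<lambda>n. q *\<^sub>R xn n) \<longlonglongrightarrow> q *\<^sub>R x)" by (intro tendsto_intros xl)
      hence "((\<lambda>n. f (q *\<^sub>R xn n)) \<longlonglongrightarrow> f (q *\<^sub>R x))"
        using xn q by (intro continuous_on_tendsto_compose[OF cont _ qx]) (auto simp: nn_iff)
      hence t1: "((\<lambda>n. f (q *\<^sub>R xn n) $ i / q) \<longlonglongrightarrow> f (q *\<^sub>R x) $ i / q)"
        using q by (intro tendsto_intros) auto
      have t2: "((\<lambda>n. yn n $ i) \<longlonglongrightarrow> y $ i)" by (intro tendsto_intros yl)
      show "y $ i \<le> f (q *\<^sub>R x) $ i / q"
        by (rule tendsto_le[OF _ t1 t2]) (use b[OF q] in \<open>auto elim: eventually_mono\<close>)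
    qed
    have t2: "((\<lambda>n. yn n $ i) \<longlonglongrightarrow> y $ i)" by (intro tendsto_intros yl)
    have y0: "0 \<le> y $ i"
      by (rule tendsto_lowerbound[OF t2]) (use a G0 xn in \<open>auto intro!: always_eventually intro: order_trans[OF G0 a]\<close>)
    have up: "g x $ i \<le> (1 + e) * y $ i" if e: "0 < e" for e
    proof -
      have "\<forall>\<^sub>F n in sequentially. x $ j \<le> (1 + e) * xn n $ j" for j
      proof (cases "x $ j = 0")
        case True
        thus ?thesis using xn e by (auto simp: nn_iff intro!: always_eventually)
      next
        case False
        hence xj: "0 < x $ j" using x by (auto simp: nn_iff less_le)
        have l1: "x $ j / (1 + e) < x $ j" using xj e by (simp add: field_simps)
        have l2: "((\<lambda>n. xn n $ j) \<longlonglongrightarrow> x $ j)" by (intro tendsto_intros xl)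
        have "\<forall>\<^sub>F n in sequentially. x $ j / (1 + e) < xn n $ j" by (rule order_tendstoD(1)[OF l2 l1])
        thus ?thesis using e by (auto elim!: eventually_mono simp: field_simps)
      qed
      hence ev: "\<forall>\<^sub>F n in sequentially. \<forall>j. x $ j \<le> (1 + e) * xn n $ j" by (rule eventually_all_finite)
      have "\<forall>\<^sub>F n in sequentially. g x $ i \<le> (1 + e) * yn n $ i"
        using ev
      proof (rule eventually_mono)
        fix n assume "\<forall>j. x $ j \<le> (1 + e) * xn n $ j"
        hence "g x $ i \<le> g ((1 + e) *\<^sub>R xn n) $ i" using x by (intro Gmono) auto
        also have "\<dots> = (1 + e) * g (xn n) $ i" using Ghom[OF xn, of "1+e" n] e by simp
        also have "\<dots> \<le> (1 + e) * yn n $ i" using a e by (intro mult_left_mono) auto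
        finally show "g x $ i \<le> (1 + e) * yn n $ i" .
      qed
      moreover have "((\<lambda>n. (1 + e) * yn n $ i) \<longlonglongrightarrow> (1 + e) * y $ i)" by (intro tendsto_intros yl)
      ultimately show ?thesis by (intro tendsto_lowerbound) auto
    qed
    show "g x $ i \<le> y $ i"
    proof (rule field_le_epsilon)
      fix d :: real assume d: "0 < d"
      have "g x $ i \<le> (1 + d / (y $ i + 1)) * y $ i" using up d y0 by auto
      also have "\<dots> = y $ i + d * (y $ i / (y $ i + 1))" using y0 by (simp add: field_simps)
      also have "\<dots> \<le> y $ i + d * 1" using y0 d by (intro add_left_mono mult_left_mono) auto
      finally show "g x $ i \<le> y $ i + d" by simp
    qed
  qed
  thus ?thesis by (simp add: vec_eq_iff)
qed


lemma subseq_eig: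
  assumes mem: "\<And>n. lam n \<in> {0..B} \<and> xn n \<in> splx"
    and a: "\<And>n i. g (xn n) $ i \<le> lam n * xn n $ i"
    and b: "\<And>q. 0 < q \<Longrightarrow> eventually (\<lambda>n. \<forall>i. lam n * xn n $ i \<le> f (q *\<^sub>R xn n) $ i / q) sequentially"
  shows "\<exists>l x r. strict_mono r \<and> (lam \<circ> r) \<longlonglongrightarrow> l \<and> x \<in> splx \<and> g x = l *\<^sub>R x \<and> 0 \<le> l"
proof -
  have K: "compact ({0..B} \<times> (splx :: (real^'k) set))"
    by (intro compact_Times splx_compact compact_Icc)
  have "\<forall>n. (lam n, xn n) \<in> {0..B} \<times> splx" using mem by auto
  then obtain lx r where lx: "lx \<in> {0..B} \<times> splx" and r: "strict_mono r"
    and lim: "((\<lambda>n. (lam n, xn n)) \<circ> r) \<longlonglongrightarrow> lx"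
    using compact_imp_seq_compact[OF K] unfolding seq_compact_def
    apply (elim allE[where x="\<lambda>n. (lam n, xn n)"])
    by blast
  obtain l x where lxe: "lx = (l, x)" by (cases lx)
  have ll: "(\<lambda>n. lam (r n)) \<longlonglongrightarrow> l" using tendsto_fst[OF lim] lxe by (simp add: o_def)
  have xl: "(\<lambda>n. xn (r n)) \<longlonglongrightarrow> x" using tendsto_snd[OF lim] lxe by (simp add: o_def)
  have gx: "g x = l *\<^sub>R x"
  proof (rule LIM[of "\<lambda>n. xn (r n)" x "\<lambda>n. lam (r n) *\<^sub>R xn (r n)"])
    show "\<And>n. xn (r n) \<in> nonneg_orthant" using mem splx_nn by blast
    show "x \<in> nonneg_orthant" using lx lxe splx_nn by auto
    show "(\<lambda>n. xn (r n)) \<longlonglongrightarrow> x" by (rule xl)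
    show "(\<lambda>n. lam (r n) *\<^sub>R xn (r n)) \<longlonglongrightarrow> l *\<^sub>R x" by (intro tendsto_intros ll xl)
    show "\<And>n i. g (xn (r n)) $ i \<le> (lam (r n) *\<^sub>R xn (r n)) $ i" using a by simp
    show "\<forall>\<^sub>F n in sequentially. \<forall>i. (lam (r n) *\<^sub>R xn (r n)) $ i \<le> f (q *\<^sub>R xn (r n)) $ i / q"
      if "0 < q" for q using eventually_subseq[OF r b[OF that]] by simp
  qed
  have "x \<in> splx" "0 \<le> l" using lx lxe by auto
  moreover have "(lam \<circ> r) \<longlonglongrightarrow> l" using ll by (simp add: o_def)
  ultimately show ?thesis using r gx by blast
qed


lemma eig_exists: "\<exists>l x. x \<in> splx \<and> g x = l *\<^sub>R x \<and> 0 \<le> l"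
proof -
  define one :: "real^'k" where "one = (\<chi> j. 1)"
  have one: "one \<in> nonneg_orthant" by (simp add: one_def nn_iff)
  define B where "B = sum (\<lambda>j. f one $ j) UNIV"
  define S where "S = (\<lambda>p x. sum (\<lambda>j. f (p *\<^sub>R x) $ j) UNIV)"
  define phi where "phi = (\<lambda>p x. (1 / S p x) *\<^sub>R f (p *\<^sub>R x))"
  have Spos: "0 < S p x" if "x \<in> splx" "0 < p" for p x
  proof -
    have "p *\<^sub>R x \<in> nonneg_orthant" using that splx_nn[OF that(1)] by (auto simp: nn_iff)
    thus ?thesis unfolding S_def using fpos by (intro sum_pos) auto
  qed
  have fixp: "\<exists>x\<in>splx. phi p x = x" if p: "0 < p" for p
  proof -
    have c1: "continuous_on splx (\<lambda>x. f (p *\<^sub>R x))"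
      by (rule continuous_on_compose2[OF cont]) (use p in \<open>auto intro!: continuous_intros simp: nn_iff splx_def\<close>)
    have c2: "continuous_on splx (S p)" unfolding S_def
      by (intro continuous_intros c1)
    have "continuous_on splx (phi p)" unfolding phi_def
      using Spos[OF _ p] by (intro continuous_intros c1 c2) force
    moreover have "phi p \<in> splx \<rightarrow> splx"
    proof
      fix x :: "real^'k" assume x: "x \<in> splx"
      have px: "p *\<^sub>R x \<in> nonneg_orthant" using x p splx_nn[OF x] by (auto simp: nn_iff)
      have "sum (\<lambda>j. phi p x $ j) UNIV = sum (\<lambda>j. f (p *\<^sub>R x) $ j) UNIV / S p x"
        unfolding phi_def by (simp add: sum_divide_distrib)
      also have "\<dots> = 1" using Spos[OF x p] by (simp add: S_def)
      finally show "phi p x \<in> splx" unfolding splx_def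
        using Spos[OF x p] fpos[OF px] by (auto simp: phi_def less_imp_le)
    qed
    ultimately obtain x where "x \<in> splx" "phi p x = x"
      using brouwer[OF splx_compact splx_convex splx_ne] by blast
    thus ?thesis by blast
  qed
  have "\<forall>n. \<exists>x. x \<in> splx \<and> phi (real n + 1) x = x"
  proof
    fix n :: nat
    have "(0::real) < real n + 1" by simp
    from fixp[OF this] show "\<exists>x. x \<in> splx \<and> phi (real n + 1) x = x" by blast
  qed
  then obtain xn where "\<forall>n. xn n \<in> splx \<and> phi (real n + 1) (xn n) = xn n" by (rule choice[THEN exE]) 
  hence xn: "\<And>n. xn n \<in> splx" "\<And>n. phi (real n + 1) (xn n) = xn n" by auto
  define lam where "lam = (\<lambda>n. S (real n + 1) (xn n) / (real n + 1))"
  have eig: "f ((real n + 1) *\<^sub>R xn n) $ i / (real n + 1) = lam n * xn n $ i" for n i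
  proof -
    have "xn n $ i = f ((real n + 1) *\<^sub>R xn n) $ i / S (real n + 1) (xn n)"
      using arg_cong[OF xn(2)[of n], of "\<lambda>v. v $ i"] by (simp add: phi_def)
    thus ?thesis using Spos[OF xn(1), of "real n + 1" n] by (simp add: lam_def field_simps)
  qed
  have mem: "lam n \<in> {0..B} \<and> xn n \<in> splx" for n
  proof -
    have p: "(1::real) \<le> real n + 1" by simp
    have "f ((real n + 1) *\<^sub>R xn n) $ j / (real n + 1) \<le> f one $ j" for j
    proof -
      have "f ((real n + 1) *\<^sub>R xn n) $ j \<le> f ((real n + 1) *\<^sub>R one) $ j"
        using xn(1)[of n] splx_le1[OF xn(1)[of n]] splx_nn[OF xn(1)[of n]]
        by (intro fmono) (auto simp: nn_iff one_def)
      hence "f ((real n + 1) *\<^sub>R xn n) $ j / (real n + 1) \<le> f ((real n + 1) *\<^sub>R one) $ j / (real n + 1)"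
        by (simp add: divide_right_mono)
      also have "\<dots> \<le> f (1 *\<^sub>R one) $ j / 1" by (rule fscale[OF one]) simp_all
      finally show ?thesis by simp
    qed
    hence "sum (\<lambda>j. f ((real n + 1) *\<^sub>R xn n) $ j / (real n + 1)) UNIV \<le> B"
      unfolding B_def by (intro sum_mono) auto
    hence "lam n \<le> B" unfolding lam_def S_def by (simp add: sum_divide_distrib)
    moreover have "0 \<le> lam n" unfolding lam_def using Spos[OF xn(1), of "real n + 1" n] by simp
    ultimately show ?thesis using xn(1) by simp
  qed
  have a: "g (xn n) $ i \<le> lam n * xn n $ i" for n i
    using G1[OF splx_nn[OF xn(1)], of "real n + 1" n i] eig[of n i] by simp
  have b: "eventually (\<lambda>n. \<forall>i. lam n * xn n $ i \<le> f (q *\<^sub>R xn n) $ i / q) sequentially" if q: "0 < q" for q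
  proof -
    have "eventually (\<lambda>n. q \<le> real n + 1) sequentially"
      using eventually_ge_at_top[of "nat \<lceil>q\<rceil>"] by (rule eventually_mono) linarith
    thus ?thesis
    proof (rule eventually_mono)
      fix n assume "q \<le> real n + 1"
      hence "f ((real n + 1) *\<^sub>R xn n) $ i / (real n + 1) \<le> f (q *\<^sub>R xn n) $ i / q" for i
        by (rule fscale[OF splx_nn[OF xn(1)] q])
      thus "\<forall>i. lam n * xn n $ i \<le> f (q *\<^sub>R xn n) $ i / q"
        using eig by simp
    qed
  qed
  obtain l x r where "x \<in> splx" "g x = l *\<^sub>R x" "0 \<le> l"
    using subseq_eig[OF mem a b] by blast
  thus ?thesis by blast
qed


lemma f_lower:
  assumes xs: "xs \<in> pos_orthant" and xfix: "f xs = xs" and v: "v \<in> nonneg_orthant"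
    and gv: "g v = l *\<^sub>R v" and t: "0 < t"
  shows "xs $ j + t * l * v $ j \<le> f (xs + t *\<^sub>R v) $ j"
proof (rule field_le_epsilon)
  fix d :: real assume d: "0 < d"
  have xsn: "xs \<in> nonneg_orthant" using xs by (auto simp: nn_iff pos_iff less_imp_le)
  have xj: "0 < xs $ j" using xs by (simp add: pos_iff)
  define s where "s = min (1/2) (d / xs $ j)"
  have s0: "0 < s" "s < 1" using d xj by (auto simp: s_def)
  define x1 where "x1 = (1 / (1 - s)) *\<^sub>R xs"
  define x2 where "x2 = (t / s) *\<^sub>R v"
  have x1: "x1 \<in> nonneg_orthant" using xsn s0 by (auto simp: x1_def nn_iff)
  have x2: "x2 \<in> nonneg_orthant" using v s0 t by (auto simp: x2_def nn_iff)
  have eq: "(1 - s) *\<^sub>R x1 + (1 - (1 - s)) *\<^sub>R x2 = xs + t *\<^sub>R v"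
    using s0 by (simp add: x1_def x2_def)
  have H: "(1 - s) * f x1 $ j + (1 - (1 - s)) * f x2 $ j \<le> f (xs + t *\<^sub>R v) $ j"
    using concI[OF x1 x2, of "1 - s" j] s0 eq by simp
  have A: "xs $ j \<le> f x1 $ j"
  proof -
    have "f xs $ j \<le> f x1 $ j"
      using xsn s0 xj by (intro fmono) (auto simp: x1_def nn_iff field_simps)
    thus ?thesis using xfix by simp
  qed
  have B: "(t / s) * (l * v $ j) \<le> f x2 $ j"
  proof -
    have "g x2 $ j = (t / s) * (l * v $ j)" using Ghom[OF v, of "t/s"] gv t s0 by (simp add: x2_def)
    thus ?thesis using Gf[OF x2, of j] by simp
  qed
  obtain a b c0 e d0 where abce: "a = xs $ j" "b = f x1 $ j" "c0 = f x2 $ j" "e = f (xs + t *\<^sub>R v) $ j" "d0 = l * v $ j"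
    by blast
  have H': "(1 - s) * b + s * c0 \<le> e" using H abce by simp
  have A': "a \<le> b" using A abce by simp
  have B': "(t / s) * d0 \<le> c0" using B abce by simp
  have "s * ((t / s) * d0) = t * d0" using s0 by simp
  moreover have "s * ((t / s) * d0) \<le> s * c0" using B' s0 by (intro mult_left_mono) auto
  moreover have "(1 - s) * a \<le> (1 - s) * b" using A' s0 by (intro mult_left_mono) auto
  moreover have "s * a \<le> d" using s0 xj abce d by (auto simp: s_def min_def field_simps split: if_splits)
  moreover have "(1 - s) * a + s * a = a" by (simp add: algebra_simps)
  ultimately have "a + t * d0 \<le> e + d" using H' by linarith
  thus "xs $ j + t * l * v $ j \<le> f (xs + t *\<^sub>R v) $ j + d" using abce by (simp add: mult.assoc)
qed


lemma bound:
  assumes xs: "xs \<in> pos_orthant" and xfix: "f xs = xs"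
    and U: "xs \<in> interior U" and c: "0 \<le> c" "c < 1"
    and contr: "\<forall>x\<in>U. \<forall>y\<in>U. thompson (f x) (f y) \<le> c * thompson x y"
    and v: "v \<in> nonneg_orthant" "v \<noteq> 0" and gv: "g v = l *\<^sub>R v" and l: "0 \<le> l"
  shows "l \<le> c"
proof -
  have xsp: "0 < xs $ i" for i using xs by (simp add: pos_iff)
  have vn: "0 \<le> v $ i" for i using v by (simp add: nn_iff)
  obtain e where e: "0 < e" "ball xs e \<subseteq> U" using U by (meson mem_interior)
  define m where "m = Max (range (\<lambda>i. v $ i / xs $ i))"
  have mge: "v $ i / xs $ i \<le> m" for i unfolding m_def by (rule Max_ge) auto
  have "m \<in> range (\<lambda>i. v $ i / xs $ i)" unfolding m_def by (rule Max_in) auto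
  then obtain j where j: "m = v $ j / xs $ j" by blast
  obtain i0 where i0: "v $ i0 \<noteq> 0" using v(2) by (auto simp: vec_eq_iff)
  have "0 < v $ i0 / xs $ i0" using i0 vn[of i0] xsp[of i0] by simp
  hence m0: "0 < m" using mge[of i0] by linarith
  have vm: "v $ i \<le> m * xs $ i" for i using mge[of i] xsp[of i] by (simp add: field_simps)
  define t where "t = e / (2 * (norm v + 1))"
  have t0: "0 < t" using e by (simp add: t_def add_nonneg_pos)
  have "t * norm v < e"
  proof -
    have "t * norm v \<le> t * (norm v + 1)" using t0 by simp
    also have "\<dots> = e / 2"
    proof -
      have "0 < norm v + 1" by (simp add: add_nonneg_pos)
      thus ?thesis unfolding t_def by (simp add: field_simps)
    qed
    finally show ?thesis using e by simp
  qed
  define y where "y = xs + t *\<^sub>R v"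
  have yU: "y \<in> U" using e \<open>t * norm v < e\<close> t0 by (auto simp: y_def dist_norm intro!: subsetD[OF e(2)])
  have xsU: "xs \<in> U" using U interior_subset by blast
  have yp: "y \<in> pos_orthant" using xsp vn t0 by (auto simp: y_def pos_iff intro: add_pos_nonneg)
  have yn: "y \<in> nonneg_orthant" using yp by (auto simp: nn_iff pos_iff less_imp_le)
  have xsn: "xs \<in> nonneg_orthant" using xs by (auto simp: nn_iff pos_iff less_imp_le)
  have M1: "M_fun y xs \<le> 1 + t * m"
  proof (rule M_upper)
    show "0 < 1 + t * m" using t0 m0 by (simp add: add_pos_pos)
    show "cone_le y ((1 + t * m) *\<^sub>R xs)" unfolding cle_iff
    proof
      fix i
      have "t * v $ i \<le> t * (m * xs $ i)" using vm[of i] t0 by (intro mult_left_mono) auto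
      thus "y $ i \<le> ((1 + t * m) *\<^sub>R xs) $ i" by (simp add: y_def algebra_simps)
    qed
  qed
  have M2: "M_fun xs y \<le> 1"
    by (rule M_upper) (use t0 vn in \<open>auto simp: cle_iff y_def\<close>)
  have M3: "0 < M_fun y xs"
  proof -
    have "0 < y $ j / xs $ j" using yp xsp[of j] by (simp add: pos_iff)
    also have "\<dots> \<le> M_fun y xs" by (rule M_lower[OF xs yn])
    finally show ?thesis .
  qed
  have "0 \<le> t * m" using t0 m0 by simp
  hence M2': "M_fun xs y \<le> 1 + t * m" using M2 by linarith
  have T1: "thompson y xs \<le> ln (1 + t * m)"
    unfolding thompson_def using M1 M2' M3 t0 m0 by (subst ln_le_cancel_iff) auto
  have fyj: "xs $ j + t * l * v $ j \<le> f y $ j" unfolding y_def by (rule f_lower[OF xs xfix v(1) gv t0])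
  have fyn: "f y \<in> nonneg_orthant" using maps yn by (auto simp: nn_iff pos_iff less_imp_le)
  have "1 + t * l * m = (xs $ j + t * l * v $ j) / xs $ j"
    using xsp[of j] by (simp add: j field_simps)
  also have "\<dots> \<le> f y $ j / xs $ j"
    using fyj xsp[of j] by (intro divide_right_mono) auto
  also have "\<dots> \<le> M_fun (f y) xs" by (rule M_lower[OF xs fyn])
  finally have M4: "1 + t * l * m \<le> M_fun (f y) xs" .
  have p4: "0 < 1 + t * l * m" using t0 l m0 by (simp add: add_pos_nonneg)
  have T2: "ln (1 + t * l * m) \<le> thompson (f y) (f xs)"
    unfolding thompson_def xfix using M4 p4 by (subst ln_le_cancel_iff) auto
  have T3: "thompson (f y) (f xs) \<le> c * thompson y xs" using contr yU xsU by blast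
  have T4: "c * thompson y xs \<le> c * ln (1 + t * m)" using T1 c by (intro mult_left_mono) auto
  have T5: "c * ln (1 + t * m) \<le> ln (1 + c * (t * m))"
  proof -
    have H: "\<forall>x\<in>{0<..}. \<forall>y\<in>{0<..}. \<forall>u\<ge>0. \<forall>v\<ge>0. u + v = 1 \<longrightarrow> u * ln x + v * ln y \<le> ln (u *\<^sub>R x + v *\<^sub>R y)"
      using ln_concave unfolding concave_on_iff by (elim conjE)
    have a1: "1 + t * m \<in> {0<..}" using t0 m0 by (simp add: add_pos_pos)
    have a2: "(1::real) \<in> {0<..}" by simp
    have a3: "0 \<le> 1 - c" "c + (1 - c) = 1" using c by auto
    have "c * ln (1 + t * m) + (1 - c) * ln 1 \<le> ln (c *\<^sub>R (1 + t * m) + (1 - c) *\<^sub>R 1)"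
      using H a1 a2 c(1) a3 by blast
    moreover have "c *\<^sub>R (1 + t * m) + (1 - c) *\<^sub>R (1::real) = 1 + c * (t * m)"
      by (simp add: algebra_simps)
    ultimately show ?thesis by (simp only: ln_one mult_zero_right add_0_right)
  qed
  have "ln (1 + t * l * m) \<le> ln (1 + c * (t * m))" using T2 T3 T4 T5 by linarith
  moreover have "0 < 1 + c * (t * m)" using t0 m0 c by (simp add: add_pos_nonneg)
  ultimately have "1 + t * l * m \<le> 1 + c * (t * m)" using p4 by simp
  hence "l * (t * m) \<le> c * (t * m)" by (simp add: algebra_simps)
  thus ?thesis using t0 m0 by (simp add: mult_pos_pos)
qed


lemma max_eig:
  assumes bnd: "\<And>l x. x \<in> nonneg_orthant \<Longrightarrow> x \<noteq> 0 \<Longrightarrow> g x = l *\<^sub>R x \<Longrightarrow> 0 \<le> l \<Longrightarrow> l \<le> c"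
  shows "cone_spectral_radius g \<le> c"
proof -
  define P where "P = (\<lambda>l. l \<ge> 0 \<and> (\<exists>x\<in>nonneg_orthant. x \<noteq> 0 \<and> g x = l *\<^sub>R x))"
  define Ss where "Ss = Collect P"
  obtain l0 x0 where x0: "x0 \<in> splx" "g x0 = l0 *\<^sub>R x0" "0 \<le> l0" using eig_exists by blast
  have "P l0" unfolding P_def using x0 splx_nn splx_nz by blast
  hence ne: "Ss \<noteq> {}" unfolding Ss_def by blast
  have Pc: "P l \<Longrightarrow> l \<le> c" for l unfolding P_def using bnd by blast
  have bdd: "bdd_above Ss" unfolding Ss_def using Pc by (intro bdd_aboveI[of _ c]) auto
  define r where "r = Sup Ss"
  have "\<forall>n. \<exists>l. P l \<and> r - inverse (real (Suc n)) < l"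
  proof
    fix n
    have "r - inverse (real (Suc n)) < r" by simp
    then obtain l where "l \<in> Ss" "r - inverse (real (Suc n)) < l"
      using less_cSupE[OF _ ne] unfolding r_def by blast
    thus "\<exists>l. P l \<and> r - inverse (real (Suc n)) < l" unfolding Ss_def by blast
  qed
  then obtain lam where lam: "\<forall>n. P (lam n) \<and> r - inverse (real (Suc n)) < lam n"
    by (rule choice[THEN exE])
  hence "\<forall>n. \<exists>x. x \<in> nonneg_orthant \<and> x \<noteq> 0 \<and> g x = lam n *\<^sub>R x" unfolding P_def by blast
  then obtain v where v: "\<forall>n. v n \<in> nonneg_orthant \<and> v n \<noteq> 0 \<and> g (v n) = lam n *\<^sub>R v n"
    by (rule choice[THEN exE])
  have lam0: "0 \<le> lam n" for n using lam unfolding P_def by blast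
  have lamr: "lam n \<le> r" for n unfolding r_def using lam bdd by (intro cSup_upper) (auto simp: Ss_def)
  have lamc: "lam n \<le> c" for n using lam Pc by blast
  define sv where "sv = (\<lambda>n. sum (\<lambda>j. v n $ j) UNIV)"
  have svp: "0 < sv n" for n
  proof -
    obtain i where i: "v n $ i \<noteq> 0" using v by (auto simp: vec_eq_iff)
    have nn: "0 \<le> v n $ j" for j using v by (simp add: nn_iff)
    have "0 < v n $ i" using i nn[of i] by simp
    thus ?thesis unfolding sv_def by (intro sum_pos2[of UNIV i]) (auto simp: nn)
  qed
  define xn where "xn = (\<lambda>n. (1 / sv n) *\<^sub>R v n)"
  have xs: "xn n \<in> splx" for n
  proof -
    have nn: "0 \<le> v n $ j" for j using v by (simp add: nn_iff)
    have "sum (\<lambda>j. xn n $ j) UNIV = sum (\<lambda>j. v n $ j) UNIV / sv n"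
      unfolding xn_def by (simp add: sum_divide_distrib)
    also have "\<dots> = 1" using svp[of n] by (simp add: sv_def)
    finally show ?thesis using svp[of n] nn by (simp add: splx_def xn_def)
  qed
  have gx: "g (xn n) = lam n *\<^sub>R xn n" for n
    unfolding xn_def using Ghom[of "v n" "1 / sv n"] v svp[of n] by simp
  have mem: "lam n \<in> {0..c} \<and> xn n \<in> splx" for n using lam0 lamc xs by auto
  have a: "g (xn n) $ i \<le> lam n * xn n $ i" for n i using gx by simp
  have b: "eventually (\<lambda>n. \<forall>i. lam n * xn n $ i \<le> f (q *\<^sub>R xn n) $ i / q) sequentially" if q: "0 < q" for q
    using G1[OF splx_nn[OF xs] q] gx by (intro always_eventually) simp
  obtain l x rr where sub: "strict_mono rr" "(lam \<circ> rr) \<longlonglongrightarrow> l" "x \<in> splx" "g x = l *\<^sub>R x" "0 \<le> l"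
    using subseq_eig[OF mem a b] by blast
  have "lam \<longlonglongrightarrow> r"
  proof (rule tendsto_sandwich[of "\<lambda>n. r - inverse (real (Suc n))" _ _ "\<lambda>n. r"])
    show "\<forall>\<^sub>F n in sequentially. r - inverse (real (Suc n)) \<le> lam n" using lam by (intro always_eventually allI less_imp_le) blast
    show "\<forall>\<^sub>F n in sequentially. lam n \<le> r" using lamr by (intro always_eventually allI)
    show "(\<lambda>n. r - inverse (real (Suc n))) \<longlonglongrightarrow> r"
      using tendsto_diff[OF tendsto_const LIMSEQ_inverse_real_of_nat, of r] by simp
  qed simp
  hence "(lam \<circ> rr) \<longlonglongrightarrow> r" using sub(1) by (rule LIMSEQ_subseq_LIMSEQ)
  hence lr: "l = r" using sub(2) by (rule LIMSEQ_unique[rotated])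
  have Pr: "P r" unfolding P_def using sub lr splx_nn splx_nz by blast
  have "cone_spectral_radius g = r" unfolding cone_spectral_radius_def
  proof (rule Greatest_equality)
    show "0 \<le> r \<and> (\<exists>x\<in>nonneg_orthant. x \<noteq> 0 \<and> g x = r *\<^sub>R x)" using Pr unfolding P_def .
    fix y assume "0 \<le> y \<and> (\<exists>x\<in>nonneg_orthant. x \<noteq> 0 \<and> g x = y *\<^sub>R x)"
    hence "y \<in> Ss" unfolding Ss_def P_def by simp
    thus "y \<le> r" unfolding r_def using bdd by (rule cSup_upper)
  qed
  thus ?thesis using Pc[OF Pr] by simp
qed

end

theorem proposition4:
  fixes f :: "real^'k \<Rightarrow> real^'k" and xs :: "real^'k" and U :: "(real^'k) set" and c :: real
  assumes f_maps: "\<forall>x\<in>nonneg_orthant. f x \<in> pos_orthant"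
    and f_cont: "continuous_on nonneg_orthant f"
    and f_conc: "cone_concave f"
    and xs_pos: "xs \<in> pos_orthant"
    and xs_fix: "f xs = xs"
    and U_compact: "compact U"
    and U_sub: "U \<subseteq> pos_orthant"
    and U_nbhd: "xs \<in> interior U"
    and c_range: "0 \<le> c" "c < 1"
    and contr: "\<forall>x\<in>U. \<forall>y\<in>U. thompson (f x) (f y) \<le> c * thompson x y"
  shows "c \<ge> cone_spectral_radius (asymptotic_map f)"
proof -
  interpret cfun f using f_maps f_cont f_conc by unfold_locales
  show ?thesis
    by (rule max_eig, rule bound[OF xs_pos xs_fix U_nbhd c_range contr]) auto
qed

end
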